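(* Let $0\le\beta\le1$ and $f\in\mathcal{A}_{\beta}$ with $f(z)=z+\sum_{n=2}^\infty a_nz^n$. Let $\Gamma_1=-\tfrac12 a_2$ and $\Gamma_2=-\tfrac12\left(a_3-\tfrac32 a_2^2\right)$. Then \[ |\Gamma_1|\le\frac{1}{2-\beta}\qquad\text{and}\qquad|\Gamma_2|\le\frac{5-2\beta-\beta^2}{(2-\beta)^2(3-2\beta)}. \] Both estimates are sharp (attained by some $f\in\mathcal{A}_\beta$).
   Context: $\mathbb{D}$ is the open unit disk; $\mathcal{A}$ is the class of holomorphic $f$ on $\mathbb{D}$ with $f(0)=0$, $f'(0)=1$. For $\beta\in[0,1]$, $\mathcal{A}_{\beta}=\{f\in\mathcal{A}: \operatorname{Re}\big(\beta\, f(z)/z+(1-\beta)f'(z)\big)>0 \text{ for all } z\in\mathbb{D}\}$. The $\Gamma_n$ are the logarithmic inverse coefficients, defined by $\log(f^{-1}(w)/w)=2\sum_{n\ge1}\Gamma_nw^n$ near $0$, where $f^{-1}$ is the local inverse of $f$; the formulas above are the resulting expressions in terms of $a_2,a_3$. *)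

theory Defs
  imports "HOL-Complex_Analysis.Complex_Analysis"
begin

text \<open>At z = 0 the quotient f(z)/z is understood as its removable value f'(0) = 1,
  so the condition there reads Re(beta + (1-beta)) = 1 > 0, which always holds.\<close>

definition class_A :: "(complex \<Rightarrow> complex) set" where
  "class_A = {f. f holomorphic_on ball 0 1 \<and> f 0 = 0 \<and> deriv f 0 = 1}"

definition class_A_beta :: "real \<Rightarrow> (complex \<Rightarrow> complex) set" where
  "class_A_beta \<beta> = {f. f \<in> class_A \<and>
     (\<forall>z\<in>ball 0 1. Re (of_real \<beta> * (if z = 0 then deriv f 0 else f z / z)
                         + (1 - of_real \<beta>) * deriv f z) > 0)}"

definition taylor_coeff :: "(complex \<Rightarrow> complex) \<Rightarrow> nat \<Rightarrow> complex" where
  "taylor_coeff f n = (deriv ^^ n) f 0 / of_nat (fact n)"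

definition Gamma1 :: "(complex \<Rightarrow> complex) \<Rightarrow> complex" where
  "Gamma1 f = - (1/2) * taylor_coeff f 2"

definition Gamma2 :: "(complex \<Rightarrow> complex) \<Rightarrow> complex" where
  "Gamma2 f = - (1/2) * (taylor_coeff f 3 - (3/2) * (taylor_coeff f 2)^2)"

end

theory Submission
  imports Defs
begin

lemma hol_fps:
  assumes "f holomorphic_on ball 0 1"
  shows "f has_fps_expansion fps_expansion f 0"
proof -
  have "f analytic_on ball 0 1" using assms by (simp add: analytic_on_open)
  then have "f analytic_on {0}" by (rule analytic_on_subset) auto
  thus ?thesis by (rule analytic_at_imp_has_fps_expansion_0)
qed

lemma fps_exp_unique:
  fixes f :: "complex \<Rightarrow> complex"
  assumes "f has_fps_expansion A" "f has_fps_expansion B"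
  shows "A = B"
  by (rule fps_ext) (simp add: fps_nth_fps_expansion[OF assms(1)] fps_nth_fps_expansion[OF assms(2)])

lemma fps_exp_nth0:
  fixes f :: "complex \<Rightarrow> complex"
  assumes "f has_fps_expansion A"
  shows "fps_nth A 0 = f 0"
  using fps_nth_fps_expansion[OF assms, of 0] by simp

lemma fps_exp_nth1:
  fixes f :: "complex \<Rightarrow> complex"
  assumes "f has_fps_expansion A"
  shows "fps_nth A 1 = deriv f 0"
  using fps_nth_fps_expansion[OF assms, of 1] by simp

lemma mobius_lt1:
  fixes g b :: complex
  assumes "norm g < 1" "norm b < 1"
  shows "norm ((g - b) / (1 - cnj b * g)) < 1"
proof -
  have nz: "1 - cnj b * g \<noteq> 0"
  proof
    assume "1 - cnj b * g = 0"
    then have "norm (cnj b * g) = 1" by (metis norm_one right_minus_eq)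
    moreover have "norm (cnj b * g) < 1" using assms
      by (simp add: norm_mult) (metis mult_strict_mono' norm_ge_zero mult_1_left)
    ultimately show False by simp
  qed
  have "(norm (g - b))^2 < (norm (1 - cnj b * g))^2"
  proof -
    have e: "(norm (1 - cnj b * g))^2 - (norm (g - b))^2 = (1 - (norm g)^2) * (1 - (norm b)^2)"
      unfolding cmod_power2 using complex_eq_iff
      by (simp add: algebra_simps power2_eq_square)
    have "0 < (1 - (norm g)^2) * (1 - (norm b)^2)"
      using assms by (intro mult_pos_pos) (simp_all add: abs_square_less_1)
    with e show ?thesis by linarith
  qed
  then have "norm (g - b) < norm (1 - cnj b * g)"
    by (meson norm_ge_zero power_less_imp_less_base)
  then show ?thesis using nz by (simp add: norm_divide divide_less_eq)
qed

lemma schwarz_coeffs: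
  fixes w :: "complex \<Rightarrow> complex"
  assumes hol: "w holomorphic_on ball 0 1" and w0: "w 0 = 0"
    and lt: "\<And>z. norm z < 1 \<Longrightarrow> norm (w z) < 1"
    and W: "w has_fps_expansion W"
  shows "norm (fps_nth W 1) \<le> 1 \<and> norm (fps_nth W 2) \<le> 1 - (norm (fps_nth W 1))^2"
proof -
  note S = Schwarz_Lemma[of w, OF hol w0 lt]
  have b1: "fps_nth W 1 = deriv w 0" by (rule fps_exp_nth1[OF W])
  have W0: "fps_nth W 0 = 0" using fps_exp_nth0[OF W] w0 by simp
  have nb1: "norm (fps_nth W 1) \<le> 1" using S(2)[of 0] b1 by simp
  show ?thesis
  proof (cases "(\<exists>z. norm z < 1 \<and> z \<noteq> 0 \<and> norm(w z) = norm z) \<or> norm(deriv w 0) = 1")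
    case True
    then obtain \<alpha> where a: "\<And>z. norm z < 1 \<Longrightarrow> w z = \<alpha> * z" "norm \<alpha> = 1"
      using S(3)[of 0] by auto
    have ev: "eventually (\<lambda>z. (\<lambda>z. \<alpha> * z) z = w z) (nhds 0)"
    proof -
      have "eventually (\<lambda>z. z \<in> ball 0 1) (nhds (0::complex))"
        by (intro eventually_nhds_in_open) auto
      then show ?thesis by eventually_elim (simp add: a(1))
    qed
    have "(\<lambda>z. \<alpha> * z) has_fps_expansion fps_const \<alpha> * fps_X"
      by (intro fps_expansion_intros)
    then have "w has_fps_expansion fps_const \<alpha> * fps_X"
      using has_fps_expansion_cong[OF ev refl] by simp
    then have "W = fps_const \<alpha> * fps_X" using fps_exp_unique W by blast
    then show ?thesis using a(2) by simp
  next
    case False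
    define g where "g z = (if z = 0 then deriv w 0 else w z / z)" for z
    define b where "b = deriv w 0"
    have holg: "g holomorphic_on ball 0 1"
      by (rule pole_theorem_open_0[OF hol, where a=0]) (auto simp: g_def w0)
    have glt: "norm (g z) < 1" if "norm z < 1" for z
    proof (cases "z = 0")
      case True
      then show ?thesis using False S(2)[of 0] by (simp add: g_def)
    next
      case z: False
      have "norm (w z) \<le> norm z" using S(1) that by blast
      moreover have "norm (w z) \<noteq> norm z" using False that z by blast
      ultimately have "norm (w z) < norm z" by simp
      then show ?thesis using z by (simp add: g_def norm_divide divide_less_eq)
    qed
    have nb: "norm b < 1" using glt[of 0] by (simp add: g_def b_def)
    have den: "1 - cnj b * g z \<noteq> 0" if "norm z < 1" for z
    proof
      assume "1 - cnj b * g z = 0"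
      then have "norm (cnj b * g z) = 1" by (metis norm_one right_minus_eq)
      moreover have "norm (cnj b * g z) < 1" using glt[OF that] nb
        by (simp add: norm_mult) (metis mult_strict_mono' norm_ge_zero mult_1_left)
      ultimately show False by simp
    qed
    define h where "h z = (g z - b) / (1 - cnj b * g z)" for z
    have holh: "h holomorphic_on ball 0 1"
      unfolding h_def using den holg by (intro holomorphic_intros) auto
    have h0: "h 0 = 0" by (simp add: h_def g_def b_def)
    have hlt: "norm (h z) < 1" if "norm z < 1" for z
      unfolding h_def by (rule mobius_lt1[OF glt[OF that] nb])
    have dh: "norm (deriv h 0) \<le> 1" using Schwarz_Lemma(2)[of h, OF holh h0 hlt, of 0] by simp
    have g0: "g 0 = b" by (simp add: g_def b_def)
    have dg: "(g has_field_derivative deriv g 0) (at 0)"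
      using holg by (intro holomorphic_derivI[of _ "ball 0 1"]) auto
    have "(h has_field_derivative deriv g 0 / (1 - cnj b * b)) (at 0)"
    proof -
      have d1: "((\<lambda>z. (g z - b) / (1 - cnj b * g z)) has_field_derivative
          ((deriv g 0 * (1 - cnj b * g 0) - (g 0 - b) * (- (cnj b * deriv g 0))) / (1 - cnj b * g 0)^2)) (at 0)"
        using den[of 0]
        by (auto intro!: derivative_eq_intros dg simp: power2_eq_square)
      have "1 - cnj b * b \<noteq> 0" using den[of 0] g0 by simp
      then show ?thesis using d1 g0 unfolding h_def[abs_def] by (simp add: power2_eq_square)
    qed
    then have "deriv h 0 = deriv g 0 / (1 - cnj b * b)" by (rule DERIV_imp_deriv)
    moreover have "deriv g 0 = fps_nth W 2"
    proof -
      have G: "g has_fps_expansion fps_expansion g 0" by (rule hol_fps[OF holg])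
      have "(\<lambda>z. g z * z) has_fps_expansion fps_expansion g 0 * fps_X"
        by (intro fps_expansion_intros G)
      moreover have "(\<lambda>z. g z * z) = w" by (auto simp: g_def w0)
      ultimately have "W = fps_expansion g 0 * fps_X" using fps_exp_unique W by auto
      then have "fps_nth W 2 = fps_nth (fps_expansion g 0) 1"
        by (simp add: numeral_2_eq_2)
      then show ?thesis using fps_exp_nth1[OF G] by simp
    qed
    moreover have "cnj b * b = of_real ((norm b)^2)"
      by (metis complex_norm_square mult.commute of_real_power)
    moreover have "0 < 1 - (norm b)^2" using nb by (simp add: abs_square_less_1)
    ultimately have "deriv h 0 = fps_nth W 2 / of_real (1 - (norm b)^2)"
      and pos: "0 < 1 - (norm b)^2" by simp_all
    then have "norm (deriv h 0) = norm (fps_nth W 2) / (1 - (norm b)^2)"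
      using pos by (simp only: norm_divide norm_of_real abs_of_pos)
    then have "norm (fps_nth W 2) / (1 - (norm b)^2) \<le> 1" using dh by simp
    then have "norm (fps_nth W 2) \<le> 1 - (norm b)^2"
      using pos by (simp add: divide_le_eq)
    then show ?thesis using nb1 b1 b_def by simp
  qed
qed

lemma carath:
  fixes p :: "complex \<Rightarrow> complex"
  assumes hol: "p holomorphic_on ball 0 1" and p0: "p 0 = 1"
    and re: "\<And>z. norm z < 1 \<Longrightarrow> Re (p z) > 0"
    and P: "p has_fps_expansion P"
  shows "\<exists>b1 b2. fps_nth P 1 = 2*b1 \<and> fps_nth P 2 = 2*b2 + 2*b1^2 \<and>
           norm b1 \<le> 1 \<and> norm b2 \<le> 1 - (norm b1)^2"
proof -
  have nz: "p z + 1 \<noteq> 0" if "norm z < 1" for z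
  proof
    assume "p z + 1 = 0"
    then have "Re (p z + 1) = 0" by simp
    with re[OF that] show False by simp
  qed
  define w where "w z = (p z - 1) / (p z + 1)" for z
  have holw: "w holomorphic_on ball 0 1"
    unfolding w_def using hol nz by (intro holomorphic_intros) auto
  have w0: "w 0 = 0" by (simp add: w_def p0)
  have wlt: "norm (w z) < 1" if z: "norm z < 1" for z
  proof -
    have "(norm (p z - 1))^2 < (norm (p z + 1))^2"
      using re[OF z] unfolding cmod_power2 by (simp add: power2_eq_square algebra_simps)
    then have "norm (p z - 1) < norm (p z + 1)"
      by (meson norm_ge_zero power_less_imp_less_base)
    then show ?thesis using nz[OF z] by (simp add: w_def norm_divide divide_less_eq)
  qed
  define W where "W = fps_expansion w 0"
  have Wexp: "w has_fps_expansion W" unfolding W_def by (rule hol_fps[OF holw])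
  have e1: "(\<lambda>z. w z * (p z + 1)) has_fps_expansion W * (P + 1)"
    by (intro fps_expansion_intros Wexp P)
  have ev: "eventually (\<lambda>z. w z * (p z + 1) = p z - 1) (nhds 0)"
  proof -
    have "eventually (\<lambda>z. z \<in> ball 0 1) (nhds (0::complex))"
      by (intro eventually_nhds_in_open) auto
    then show ?thesis by eventually_elim (use nz in \<open>simp add: w_def\<close>)
  qed
  have "(\<lambda>z. p z - 1) has_fps_expansion W * (P + 1)"
    using has_fps_expansion_cong[OF ev refl] e1 by simp
  moreover have "(\<lambda>z. p z - 1) has_fps_expansion P - 1"
    by (intro fps_expansion_intros P)
  ultimately have eq: "W * (P + 1) = P - 1" by (rule fps_exp_unique)
  have W0: "fps_nth W 0 = 0" using fps_exp_nth0[OF Wexp] w0 by simp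
  have P0: "fps_nth P 0 = 1" using fps_exp_nth0[OF P] p0 by simp
  have c1: "fps_nth P 1 = 2 * fps_nth W 1"
    using arg_cong[OF eq, of "\<lambda>F. fps_nth F 1"] W0 P0
    by (simp add: fps_mult_nth mult.commute)
  have c2: "fps_nth P 2 = 2 * fps_nth W 2 + 2 * (fps_nth W 1)^2"
    using arg_cong[OF eq, of "\<lambda>F. fps_nth F 2"] W0 P0 c1
    by (simp add: fps_mult_nth numeral_2_eq_2 power2_eq_square algebra_simps)
  show ?thesis using c1 c2 schwarz_coeffs[OF holw w0 wlt Wexp] by blast
qed

lemma final_alg:
  fixes \<beta> :: real and a2 a3 b1 b2 :: complex
  assumes "0 \<le> \<beta>" "\<beta> \<le> 1"
    and e2: "of_real (2 - \<beta>) * a2 = 2 * b1"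
    and e3: "of_real (3 - 2*\<beta>) * a3 = 2 * b2 + 2 * b1^2"
    and n1: "norm b1 \<le> 1" and n2: "norm b2 \<le> 1 - (norm b1)^2"
  shows "norm (- (1/2) * a2) \<le> 1 / (2 - \<beta>)"
    and "norm (- (1/2) * (a3 - (3/2) * a2^2)) \<le> (5 - 2*\<beta> - \<beta>^2) / ((2 - \<beta>)^2 * (3 - 2*\<beta>))"
proof -
  define s where "s = 3 - 2*\<beta>"
  define t where "t = (2 - \<beta>)^2"
  define Kc where "Kc = 5 - 2*\<beta> - \<beta>^2"
  have s0: "s > 0" and t0: "t > 0" using assms(1,2) by (simp_all add: s_def t_def)
  have b0: "2 - \<beta> > 0" using assms by simp
  have nz2: "(of_real (2 - \<beta>) :: complex) \<noteq> 0" using b0 by (simp only: of_real_eq_0_iff)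
  have nz3: "(of_real s :: complex) \<noteq> 0" using s0 by (simp only: of_real_eq_0_iff)
  have a2: "a2 = 2 * b1 / of_real (2 - \<beta>)"
    by (metis nz2 e2 nonzero_mult_div_cancel_left)
  have a3: "a3 = (2 * b2 + 2 * b1^2) / of_real s"
    by (metis nz3 e3 s_def nonzero_mult_div_cancel_left)
  show "norm (- (1/2) * a2) \<le> 1 / (2 - \<beta>)"
  proof -
    have "cmod (2 - complex_of_real \<beta>) = 2 - \<beta>"
      using b0 by (metis norm_of_real abs_of_pos of_real_diff of_real_numeral)
    then show ?thesis
      using n1 b0 by (simp add: a2 norm_divide norm_mult divide_right_mono)
  qed
  have eq: "- (1/2) * (a3 - (3/2) * a2^2) = - (b2 - b1^2 * of_real (Kc / t)) / of_real s"
  proof -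
    have D: "of_real (2 - \<beta>) = (2 - of_real \<beta> :: complex)" by simp
    have S: "(of_real s :: complex) = 2 * (2 - of_real \<beta>) - 1" by (simp add: s_def)
    have Kr: "Kc = -3 + 6 * (2 - \<beta>) - (2 - \<beta>)^2"
      by (simp add: Kc_def power2_eq_square algebra_simps)
    have KK: "(of_real (Kc / t) :: complex) = (-3 + 6 * (2 - of_real \<beta>) - (2 - of_real \<beta>)^2) / (2 - of_real \<beta>)^2"
      unfolding Kr t_def by simp
    have g: "\<And>D :: complex. D \<noteq> 0 \<Longrightarrow> 2 * D - 1 \<noteq> 0 \<Longrightarrow>
       - (1/2) * ((2 * b2 + 2 * b1^2) / (2 * D - 1) - (3/2) * (2 * b1 / D)^2) =
       - (b2 - b1^2 * ((-3 + 6 * D - D^2) / D^2)) / (2 * D - 1)"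
    proof -
      fix D :: complex assume d: "D \<noteq> 0" "2 * D - 1 \<noteq> 0"
      show "- (1/2) * ((2 * b2 + 2 * b1^2) / (2 * D - 1) - (3/2) * (2 * b1 / D)^2) =
       - (b2 - b1^2 * ((-3 + 6 * D - D^2) / D^2)) / (2 * D - 1)"
        using d by (simp add: divide_simps) (simp add: algebra_simps power2_eq_square)
    qed
    show ?thesis unfolding a2 a3 KK S
      using g[of "2 - of_real \<beta>"] nz2 nz3 S D by simp
  qed
  have Kt: "Kc / t \<ge> 1"
  proof -
    have "Kc - t = 1 + 2 * \<beta> * (1 - \<beta>)"
      by (simp add: Kc_def t_def power2_eq_square algebra_simps)
    moreover have "0 \<le> \<beta> * (1 - \<beta>)" using assms(1,2) by simp
    ultimately have "t \<le> Kc" by linarith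
    then show ?thesis using t0 by simp
  qed
  have "norm (b2 - b1^2 * of_real (Kc / t)) \<le> norm b2 + (norm b1)^2 * (Kc / t)"
  proof -
    have "norm (b1^2 * of_real (Kc / t)) = (norm b1)^2 * (Kc / t)"
      using Kt by (simp only: norm_mult norm_power norm_of_real)
    then show ?thesis using norm_triangle_ineq4[of b2 "b1^2 * of_real (Kc / t)"] by simp
  qed
  also have "\<dots> \<le> Kc / t"
  proof -
    have "(norm b1)^2 \<le> 1" using n1 by (simp add: power_le_one)
    then have "(norm b1)^2 * (Kc/t - 1) \<le> 1 * (Kc/t - 1)"
      using Kt by (intro mult_right_mono) auto
    then show ?thesis using n2 by (simp add: algebra_simps)
  qed
  finally have nb: "norm (b2 - b1^2 * of_real (Kc / t)) \<le> Kc / t" .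
  have "norm (- (1/2) * (a3 - (3/2) * a2^2)) = norm (b2 - b1^2 * of_real (Kc / t)) / s"
    unfolding eq using s0 by (simp only: norm_divide norm_minus_cancel norm_of_real abs_of_pos)
  then have "norm (- (1/2) * (a3 - (3/2) * a2^2)) \<le> (Kc / t) / s"
    using divide_right_mono[OF nb, of s] s0 by linarith
  then show "norm (- (1/2) * (a3 - (3/2) * a2^2)) \<le> (5 - 2*\<beta> - \<beta>^2) / ((2 - \<beta>)^2 * (3 - 2*\<beta>))"
    by (simp add: Kc_def t_def s_def)
qed

lemma upper:
  fixes \<beta> :: real
  assumes b: "0 \<le> \<beta>" "\<beta> \<le> 1" and f: "f \<in> class_A_beta \<beta>"
  shows "norm (Gamma1 f) \<le> 1 / (2 - \<beta>) \<and>
         norm (Gamma2 f) \<le> (5 - 2*\<beta> - \<beta>^2) / ((2 - \<beta>)^2 * (3 - 2*\<beta>))"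
proof -
  have hol: "f holomorphic_on ball 0 1" and f0: "f 0 = 0" and df0: "deriv f 0 = 1"
    and pos: "\<And>z. z \<in> ball 0 1 \<Longrightarrow> Re (of_real \<beta> * (if z = 0 then deriv f 0 else f z / z)
                         + (1 - of_real \<beta>) * deriv f z) > 0"
    using f by (auto simp: class_A_beta_def class_A_def)
  define F where "F = fps_expansion f 0"
  have Fexp: "f has_fps_expansion F" unfolding F_def by (rule hol_fps[OF hol])
  have tc: "taylor_coeff f n = fps_nth F n" for n
    unfolding taylor_coeff_def fps_nth_fps_expansion[OF Fexp] by simp
  have F0: "fps_nth F 0 = 0" using fps_exp_nth0[OF Fexp] f0 by simp
  have F1: "fps_nth F 1 = 1" using fps_exp_nth1[OF Fexp] df0 by simp
  have Fnz: "F \<noteq> 0" using F1 by auto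
  have sd: "1 \<le> subdegree F" using Fnz F0 by (intro subdegree_geI) auto
  define q where "q z = (if z = 0 then deriv f 0 else f z / z)" for z
  define p where "p z = of_real \<beta> * q z + (1 - of_real \<beta>) * deriv f z" for z
  have holq: "q holomorphic_on ball 0 1"
    by (rule pole_theorem_open_0[OF hol, where a=0]) (auto simp: q_def f0)
  have holdf: "deriv f holomorphic_on ball 0 1"
    by (rule holomorphic_deriv[OF hol]) auto
  have holp: "p holomorphic_on ball 0 1"
    unfolding p_def[abs_def] using holq holdf hol by (intro holomorphic_intros) auto
  have p0: "p 0 = 1" by (simp add: p_def q_def df0 algebra_simps)
  have rep: "Re (p z) > 0" if "norm z < 1" for z
    using pos[of z] that by (simp add: p_def q_def)
  have "(\<lambda>x. if x = 0 then fps_nth F 1 else f x / x ^ 1) has_fps_expansion fps_shift 1 F"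
    by (rule has_fps_expansion_shift[OF Fexp sd refl])
  moreover have "(\<lambda>x. if x = 0 then fps_nth F 1 else f x / x ^ 1) = q"
    using F1 df0 by (auto simp: q_def)
  ultimately have qexp: "q has_fps_expansion fps_shift 1 F" by simp
  define P where "P = fps_const (of_real \<beta>) * fps_shift 1 F + fps_const (1 - of_real \<beta>) * fps_deriv F"
  have Pexp: "p has_fps_expansion P"
    unfolding P_def p_def[abs_def]
    by (intro fps_expansion_intros qexp has_fps_expansion_deriv Fexp)
  obtain b1 b2 where bb: "fps_nth P 1 = 2*b1" "fps_nth P 2 = 2*b2 + 2*b1^2"
      "norm b1 \<le> 1" "norm b2 \<le> 1 - (norm b1)^2"
    using carath[OF holp p0 rep Pexp] by blast
  have P1: "fps_nth P 1 = of_real (2 - \<beta>) * fps_nth F 2"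
    by (simp add: P_def numeral_2_eq_2 algebra_simps)
  have P2: "fps_nth P 2 = of_real (3 - 2*\<beta>) * fps_nth F 3"
    by (simp add: P_def numeral_3_eq_3 numeral_2_eq_2 algebra_simps)
  note fa = final_alg[OF b, of "fps_nth F 2" b1 "fps_nth F 3" b2]
  show ?thesis
    using fa bb P1 P2 unfolding Gamma1_def Gamma2_def tc by auto
qed

definition ext_fps :: "real \<Rightarrow> complex fps" where
  "ext_fps \<beta> = Abs_fps (\<lambda>n. if n = 0 then 0 else if n = 1 then 1
                             else of_real (2 / (real n - (real n - 1) * \<beta>)))"

lemma ext_den:
  fixes \<beta> :: real
  assumes "0 \<le> \<beta>" "\<beta> \<le> 1" "n \<ge> 1"
  shows "real n - (real n - 1) * \<beta> \<ge> 1"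
proof -
  have "(real n - 1) * \<beta> \<le> (real n - 1) * 1"
    using assms by (intro mult_left_mono) auto
  then show ?thesis by simp
qed

lemma ext_radius:
  fixes \<beta> :: real
  assumes b: "0 \<le> \<beta>" "\<beta> \<le> 1"
  shows "fps_conv_radius (ext_fps \<beta>) \<ge> 1"
  unfolding fps_conv_radius_def
proof (rule conv_radius_geI_ex')
  fix r :: real assume r: "0 < r" "ereal r < 1"
  then have r1: "r < 1" by simp
  have bd: "norm (fps_nth (ext_fps \<beta>) n) \<le> 2" for n
  proof -
    consider "n = 0" | "n = 1" | "n \<ge> 2" by linarith
    then show ?thesis
    proof cases
      case 3
      then have d: "real n - (real n - 1) * \<beta> \<ge> 1" using ext_den[OF b, of n] by simp
      then have "2 / (real n - (real n - 1) * \<beta>) \<le> 2" by (simp add: divide_le_eq)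
      moreover have "2 / (real n - (real n - 1) * \<beta>) \<ge> 0" using d by simp
      moreover have "fps_nth (ext_fps \<beta>) n = of_real (2 / (real n - (real n - 1) * \<beta>))"
        using 3 unfolding ext_fps_def by simp
      ultimately show ?thesis by (simp only: norm_of_real)
    qed (auto simp: ext_fps_def)
  qed
  have "summable (\<lambda>n. 2 * r ^ n)"
    using r r1 by (intro summable_mult summable_geometric) simp
  then show "summable (\<lambda>n. fps_nth (ext_fps \<beta>) n * of_real r ^ n)"
  proof (rule summable_comparison_test'[where N=0])
    fix n :: nat
    show "norm (fps_nth (ext_fps \<beta>) n * of_real r ^ n) \<le> 2 * r ^ n"
      using bd[of n] r by (simp add: norm_mult norm_power mult_right_mono)
  qed
qed

lemma re_moebius_pos:
  fixes z :: complex
  assumes "norm z < 1"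
  shows "Re ((1 + z) / (1 - z)) > 0"
proof -
  have z1: "z \<noteq> 1" using assms by auto
  have d: "(Re (1 - z))^2 + (Im (1 - z))^2 > 0"
  proof -
    have "1 - z \<noteq> 0" using z1 by simp
    then show ?thesis using complex_eq_iff
      by (metis add_pos_nonneg not_less_iff_gr_or_eq power2_less_0 sum_power2_gt_zero_iff zero_complex.sel)
  qed
  have n: "(Re z)^2 + (Im z)^2 < 1" using assms unfolding cmod_def
    by (metis real_sqrt_lt_1_iff)
  have "Re (1 + z) * Re (1 - z) + Im (1 + z) * Im (1 - z) = 1 - ((Re z)^2 + (Im z)^2)"
    by (simp add: power2_eq_square algebra_simps)
  then show ?thesis unfolding Re_divide using d n by simp
qed

lemma geo_eval:
  fixes z :: complex
  assumes "norm z < 1"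
  shows "eval_fps (Abs_fps (\<lambda>n. if n = 0 then 1 else 2)) z = (1 + z) / (1 - z)"
proof -
  have z1: "1 - z \<noteq> 0" using assms by auto
  have g: "(\<lambda>n. z ^ n) sums (1 / (1 - z))" using geometric_sums[OF assms] by simp
  have "(\<lambda>n. 2 * z ^ n - (if n = 0 then 1 else 0)) sums (2 * (1 / (1 - z)) - 1)"
    by (intro sums_diff sums_mult g) (rule sums_single[of 0 "\<lambda>_. 1::complex", simplified])
  moreover have "(\<lambda>n. 2 * z ^ n - (if n = 0 then 1 else 0)) = (\<lambda>n. fps_nth (Abs_fps (\<lambda>n. if n = 0 then 1 else 2)) n * z ^ n)"
    by (auto simp: fun_eq_iff)
  moreover have "2 * (1 / (1 - z)) - 1 = (1 + z) / (1 - z)" using z1 by (simp add: field_simps)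
  ultimately show ?thesis unfolding eval_fps_def by (metis sums_unique)
qed

lemma ext_coeffs:
  fixes \<beta> :: real
  assumes b: "0 \<le> \<beta>" "\<beta> \<le> 1"
  shows "fps_const (of_real \<beta>) * fps_shift 1 (ext_fps \<beta>) + fps_const (1 - of_real \<beta>) * fps_deriv (ext_fps \<beta>)
         = Abs_fps (\<lambda>n. if n = 0 then 1 else 2)"
proof (rule fps_ext)
  fix n :: nat
  show "fps_nth (fps_const (of_real \<beta>) * fps_shift 1 (ext_fps \<beta>) + fps_const (1 - of_real \<beta>) * fps_deriv (ext_fps \<beta>)) n
        = fps_nth (Abs_fps (\<lambda>n. if n = 0 then 1 else 2)) n"
  proof (cases "n = 0")
    case True
    then show ?thesis by (simp add: ext_fps_def)
  next
    case False
    define d where "d = real (n+1) - (real (n+1) - 1) * \<beta>"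
    have d1: "d \<ge> 1" unfolding d_def by (rule ext_den[OF b]) simp
    have En: "fps_nth (ext_fps \<beta>) (n+1) = of_real (2 / d)"
      using False by (simp add: ext_fps_def d_def)
    have r: "\<beta> * (2 / d) + (1 - \<beta>) * real (n+1) * (2 / d) = 2"
    proof -
      have "\<beta> + (1 - \<beta>) * real (n+1) = d" by (simp add: d_def algebra_simps)
      then have "\<beta> * (2 / d) + (1 - \<beta>) * real (n+1) * (2 / d) = d * (2 / d)"
        by (metis distrib_right mult.assoc)
      also have "\<dots> = 2" using d1 by simp
      finally show ?thesis .
    qed
    have "of_real \<beta> * of_real (2 / d) + (1 - of_real \<beta>) * (of_nat (n+1) * of_real (2 / d)) = (of_real 2 :: complex)"
    proof -
      have "of_real \<beta> * of_real (2 / d) + (1 - of_real \<beta>) * (of_nat (n+1) * of_real (2 / d))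
          = (of_real (\<beta> * (2 / d) + (1 - \<beta>) * real (n+1) * (2 / d)) :: complex)"
        by (simp only: of_real_add of_real_mult of_real_diff of_real_1 of_real_of_nat_eq mult.assoc)
      then show ?thesis by (simp only: r)
    qed
    then show ?thesis using False
      by (simp only: fps_add_nth fps_mult_left_const_nth fps_shift_nth fps_deriv_nth En)
         (simp add: add.commute)
  qed
qed

lemma cmult_eval:
  fixes A :: "complex fps"
  assumes "ereal (norm z) < fps_conv_radius A"
  shows "ereal (norm z) < fps_conv_radius (fps_const c * A)"
    and "eval_fps (fps_const c * A) z = c * eval_fps A z"
proof -
  have "fps_conv_radius (fps_const c * A) \<ge> min (fps_conv_radius (fps_const c)) (fps_conv_radius A)"
    by (rule fps_conv_radius_mult)
  then show r: "ereal (norm z) < fps_conv_radius (fps_const c * A)" using assms by simp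
  show "eval_fps (fps_const c * A) z = c * eval_fps A z"
    using eval_fps_mult[of z "fps_const c" A] assms by simp
qed

lemma ext_mem:
  fixes \<beta> :: real
  assumes b: "0 \<le> \<beta>" "\<beta> \<le> 1"
  shows "eval_fps (ext_fps \<beta>) \<in> class_A_beta \<beta>"
    and "eval_fps (ext_fps \<beta>) has_fps_expansion ext_fps \<beta>"
proof -
  define E where "E = ext_fps \<beta>"
  have R: "fps_conv_radius E \<ge> 1" unfolding E_def by (rule ext_radius[OF b])
  have inR: "ereal (norm z) < fps_conv_radius E" if "norm z < 1" for z :: complex
  proof -
    have "ereal (norm z) < ereal 1" using that by simp
    then show ?thesis using R by (metis one_ereal_def order_less_le_trans)
  qed
  have sub: "ball (0::complex) 1 \<subseteq> eball 0 (fps_conv_radius E)"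
  proof
    fix x :: complex assume "x \<in> ball 0 1"
    then have "norm x < 1" by simp
    then show "x \<in> eball 0 (fps_conv_radius E)" using inR by simp
  qed
  have hol: "eval_fps E holomorphic_on ball 0 1" by (rule holomorphic_on_eval_fps[OF sub])
  have Rp: "fps_conv_radius E > 0" using inR[of 0] by (simp add: zero_ereal_def)
  have Eexp: "eval_fps E has_fps_expansion E" by (rule eval_fps_has_fps_expansion[OF Rp])
  then show "eval_fps (ext_fps \<beta>) has_fps_expansion ext_fps \<beta>" by (simp add: E_def)
  have E0: "eval_fps E 0 = 0" by (simp add: eval_fps_at_0 E_def ext_fps_def)
  have E1: "deriv (eval_fps E) 0 = 1" using fps_exp_nth1[OF Eexp] by (simp add: E_def ext_fps_def)
  have sd: "1 \<le> subdegree E"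
  proof -
    have "fps_nth E 1 = 1" by (simp add: E_def ext_fps_def)
    then have "E \<noteq> 0" by auto
    moreover have "fps_nth E 0 = 0" by (simp add: E_def ext_fps_def)
    ultimately show ?thesis by (intro subdegree_geI) auto
  qed
  have pos: "Re (of_real \<beta> * (if z = 0 then deriv (eval_fps E) 0 else eval_fps E z / z)
                 + (1 - of_real \<beta>) * deriv (eval_fps E) z) > 0" if z: "z \<in> ball 0 1" for z
  proof (cases "z = 0")
    case True
    then show ?thesis using E1 by simp
  next
    case False
    have nz: "norm z < 1" using z by simp
    have r1: "norm z < fps_conv_radius (fps_shift 1 E)" using inR[OF nz] by simp
    have r2: "norm z < fps_conv_radius (fps_deriv E)"
      using inR[OF nz] fps_conv_radius_deriv[of E] by (meson order_less_le_trans)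
    have a: "eval_fps E z / z = eval_fps (fps_shift 1 E) z"
      using eval_fps_shift[OF sd inR[OF nz]] False by simp
    have bq: "deriv (eval_fps E) z = eval_fps (fps_deriv E) z"
      using eval_fps_deriv[OF inR[OF nz]] by simp
    have "of_real \<beta> * (eval_fps E z / z) + (1 - of_real \<beta>) * deriv (eval_fps E) z
        = eval_fps (fps_const (of_real \<beta>) * fps_shift 1 E + fps_const (1 - of_real \<beta>) * fps_deriv E) z"
      unfolding a bq
      by (subst eval_fps_add[OF cmult_eval(1)[OF r1] cmult_eval(1)[OF r2]])
         (simp only: cmult_eval(2)[OF r1] cmult_eval(2)[OF r2])
    also have "\<dots> = (1 + z) / (1 - z)"
      unfolding E_def ext_coeffs[OF b] using geo_eval[OF nz] .
    finally show ?thesis using re_moebius_pos[OF nz] False by simp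
  qed
  show "eval_fps (ext_fps \<beta>) \<in> class_A_beta \<beta>"
    using hol E0 E1 pos unfolding class_A_beta_def class_A_def E_def by blast
qed

theorem theorem2p3:
  fixes \<beta> :: real
  assumes "0 \<le> \<beta>" and "\<beta> \<le> 1"
  shows "(\<forall>f\<in>class_A_beta \<beta>.
            norm (Gamma1 f) \<le> 1 / (2 - \<beta>) \<and>
            norm (Gamma2 f) \<le> (5 - 2*\<beta> - \<beta>^2) / ((2 - \<beta>)^2 * (3 - 2*\<beta>)))
       \<and> (\<exists>f\<in>class_A_beta \<beta>. norm (Gamma1 f) = 1 / (2 - \<beta>))
       \<and> (\<exists>f\<in>class_A_beta \<beta>. norm (Gamma2 f) = (5 - 2*\<beta> - \<beta>^2) / ((2 - \<beta>)^2 * (3 - 2*\<beta>)))"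
proof -
  note b = assms
  define fe where "fe = eval_fps (ext_fps \<beta>)"
  have mem: "fe \<in> class_A_beta \<beta>" unfolding fe_def by (rule ext_mem(1)[OF b])
  have ex: "fe has_fps_expansion ext_fps \<beta>" unfolding fe_def by (rule ext_mem(2)[OF b])
  have tc: "taylor_coeff fe n = fps_nth (ext_fps \<beta>) n" for n
    unfolding taylor_coeff_def fps_nth_fps_expansion[OF ex] by simp
  define x2 where "x2 = 2 / (2 - \<beta>)"
  define x3 where "x3 = 2 / (3 - 2*\<beta>)"
  have E2: "taylor_coeff fe 2 = of_real x2"
    unfolding tc ext_fps_def x2_def by simp
  have E3: "taylor_coeff fe 3 = of_real x3"
    unfolding tc ext_fps_def x3_def by simp
  have b0: "2 - \<beta> > 0" and s0: "3 - 2*\<beta> > 0" using b by simp_all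
  have G1: "Gamma1 fe = of_real (- (1/2) * x2)" unfolding Gamma1_def E2 by simp
  have "norm (Gamma1 fe) = 1 / (2 - \<beta>)"
    unfolding G1 norm_of_real x2_def using b0 by simp
  moreover have "norm (Gamma2 fe) = (5 - 2*\<beta> - \<beta>^2) / ((2 - \<beta>)^2 * (3 - 2*\<beta>))"
  proof -
    have G2: "Gamma2 fe = of_real (- (1/2) * (x3 - (3/2) * x2^2))" unfolding Gamma2_def E2 E3 by simp
    have v: "- (1/2) * (x3 - (3/2) * x2^2) = (5 - 2*\<beta> - \<beta>^2) / ((2 - \<beta>)^2 * (3 - 2*\<beta>))"
    proof -
      define d where "d = 2 - \<beta>"
      have be: "\<beta> = 2 - d" by (simp add: d_def)
      have d0: "d > 0" and sd: "2 * d - 1 > 0" using b0 s0 by (simp_all add: d_def)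
      have "- (1/2) * (2 / (2 * d - 1) - (3/2) * (2 / d)^2) = (5 - 2*(2-d) - (2-d)^2) / (d^2 * (2 * d - 1))"
        using d0 sd by (simp add: divide_simps power2_eq_square) (simp add: algebra_simps)
      moreover have "x2 = 2 / d" "x3 = 2 / (2 * d - 1)" unfolding x2_def x3_def d_def
        by (simp_all add: algebra_simps)
      moreover have "(5 - 2*\<beta> - \<beta>^2) / ((2 - \<beta>)^2 * (3 - 2*\<beta>)) = (5 - 2*(2-d) - (2-d)^2) / (d^2 * (2 * d - 1))"
        unfolding d_def by (simp add: algebra_simps)
      ultimately show ?thesis by simp

    qed
    have "5 - 2*\<beta> - \<beta>^2 > 0"
    proof -
      have "\<beta>^2 \<le> 1" using b by (simp add: power_le_one)
      then show ?thesis using b by simp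
    qed
    then have "(5 - 2*\<beta> - \<beta>^2) / ((2 - \<beta>)^2 * (3 - 2*\<beta>)) > 0" using b0 s0 by simp
    then show ?thesis unfolding G2 norm_of_real v by (simp only: abs_of_pos)
  qed
  ultimately show ?thesis using upper[OF b] mem by blast
qed

end
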